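(* Let $X$ and $Y$ be any words. Then $X\sim Y$ if and only if there is a sequence of swaps between $X$ and $Y$ in which every swap is of type $(U,D)$ for some upper prime $U$ and some lower prime $D$.
   Context: $\mathcal{A}$ is the free associative $\mathbb{C}$-algebra on noncommuting generators $L,R$; words are finite products of these letters. A word is balanced if it contains equally many $L$'s and $R$'s. $\mathcal{J}$ is the two-sided ideal generated by $\{FG-GF : F,G \text{ nonempty balanced words}\}$, and $X\sim Y$ means $X-Y\in\mathcal{J}$. For nonempty balanced $F,G$ and words $W_1,W_2$, the words $W_1FGW_2$ and $W_1GFW_2$ are related by a swap of type $(F,G)$ (same as type $(G,F)$); a sequence of swaps between $X$ and $Y$ is a sequence $Z_1=X,\dots,Z_k=Y$ with consecutive words related by a swap. A word is prime if it is nonempty, balanced, and not a product of two nonempty balanced words. For balanced $W=a_1\cdots a_n$, $e_k(W)=\sum_{i=1}^k\overline{a_i}$ with $\overline{R}=1$, $\overline{L}=-1$. A prime $P$ of length $n$ is an upper prime if $e_k(P)>0$ for $1\le k\le n-1$, and a lower prime if $e_k(P)<0$ for $1\le k\le n-1$. *)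

theory Defs
  imports Complex_Main
begin

datatype letter = L | R

type_synonym word = "letter list"

text \<open>Elements of the free associative algebra C<L,R>: finitely supported
  coefficient functions on words.\<close>
type_synonym alg = "word \<Rightarrow> complex"

definition fin_supp :: "alg \<Rightarrow> bool" where
  "fin_supp p \<longleftrightarrow> finite {w. p w \<noteq> 0}"

definition mon :: "word \<Rightarrow> alg" where
  "mon w = (\<lambda>v. if v = w then 1 else 0)"

definition amul :: "alg \<Rightarrow> alg \<Rightarrow> alg" where
  "amul p q = (\<lambda>w. \<Sum>i\<le>length w. p (take i w) * q (drop i w))"

definition balanced :: "word \<Rightarrow> bool" where
  "balanced w \<longleftrightarrow> length (filter (\<lambda>a. a = L) w) = length (filter (\<lambda>a. a = R) w)"

inductive_set Jideal :: "alg set" where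
  gen: "F \<noteq> [] \<Longrightarrow> G \<noteq> [] \<Longrightarrow> balanced F \<Longrightarrow> balanced G \<Longrightarrow>
        (\<lambda>w. mon (F @ G) w - mon (G @ F) w) \<in> Jideal"
| zero: "(\<lambda>w. 0) \<in> Jideal"
| add: "a \<in> Jideal \<Longrightarrow> b \<in> Jideal \<Longrightarrow> (\<lambda>w. a w + b w) \<in> Jideal"
| lmul: "fin_supp c \<Longrightarrow> a \<in> Jideal \<Longrightarrow> amul c a \<in> Jideal"
| rmul: "fin_supp c \<Longrightarrow> a \<in> Jideal \<Longrightarrow> amul a c \<in> Jideal"

definition sim :: "word \<Rightarrow> word \<Rightarrow> bool" where
  "sim X Y \<longleftrightarrow> (\<lambda>w. mon X w - mon Y w) \<in> Jideal"

definition lval :: "letter \<Rightarrow> int" where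
  "lval a = (if a = R then 1 else -1)"

definition ek :: "nat \<Rightarrow> word \<Rightarrow> int" where
  "ek k W = (\<Sum>i<k. lval (W ! i))"

definition prime_word :: "word \<Rightarrow> bool" where
  "prime_word P \<longleftrightarrow> P \<noteq> [] \<and> balanced P \<and>
     \<not> (\<exists>A B. A \<noteq> [] \<and> B \<noteq> [] \<and> balanced A \<and> balanced B \<and> P = A @ B)"

definition upper_prime :: "word \<Rightarrow> bool" where
  "upper_prime P \<longleftrightarrow> prime_word P \<and> (\<forall>k. 1 \<le> k \<and> k \<le> length P - 1 \<longrightarrow> ek k P > 0)"

definition lower_prime :: "word \<Rightarrow> bool" where
  "lower_prime P \<longleftrightarrow> prime_word P \<and> (\<forall>k. 1 \<le> k \<and> k \<le> length P - 1 \<longrightarrow> ek k P < 0)"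

definition swap_of_type :: "word \<Rightarrow> word \<Rightarrow> word \<Rightarrow> word \<Rightarrow> bool" where
  "swap_of_type F G X Y \<longleftrightarrow> (\<exists>W1 W2.
     (X = W1 @ F @ G @ W2 \<and> Y = W1 @ G @ F @ W2) \<or>
     (X = W1 @ G @ F @ W2 \<and> Y = W1 @ F @ G @ W2))"

definition UD_swap :: "word \<Rightarrow> word \<Rightarrow> bool" where
  "UD_swap X Y \<longleftrightarrow> (\<exists>U D. upper_prime U \<and> lower_prime D \<and> swap_of_type U D X Y)"

end

theory Submission
  imports Defs
begin

lemma swap_sym: "swap_of_type F G X Y \<Longrightarrow> swap_of_type F G Y X"
  unfolding swap_of_type_def by blast

lemma UD_sym: "UD_swap X Y \<Longrightarrow> UD_swap Y X"
  unfolding UD_swap_def using swap_sym by blast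

lemma E_sym: "UD_swap\<^sup>*\<^sup>* X Y \<Longrightarrow> UD_swap\<^sup>*\<^sup>* Y X"
proof (induction rule: rtranclp.induct)
  case (rtrancl_refl a) then show ?case by simp
next
  case (rtrancl_into_rtrancl a b c)
  then show ?case using converse_rtranclp_into_rtranclp[of UD_swap c b a] UD_sym by blast
qed

lemma swap_cong: "swap_of_type F G X Y \<Longrightarrow> swap_of_type F G (u@X@v) (u@Y@v)"
  unfolding swap_of_type_def
  apply (elim exE disjE)
   apply (rule_tac x="u@W1" in exI, rule_tac x="W2@v" in exI, simp)+
  done

lemma UD_cong: "UD_swap X Y \<Longrightarrow> UD_swap (u@X@v) (u@Y@v)"
  unfolding UD_swap_def using swap_cong by blast

lemma E_cong: "UD_swap\<^sup>*\<^sup>* X Y \<Longrightarrow> UD_swap\<^sup>*\<^sup>* (u@X@v) (u@Y@v)"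
proof (induction rule: rtranclp.induct)
  case (rtrancl_refl a) then show ?case by simp
next
  case (rtrancl_into_rtrancl a b c)
  then show ?case using rtranclp.rtrancl_into_rtrancl UD_cong by metis
qed

lemma E_cong_l: "UD_swap\<^sup>*\<^sup>* X Y \<Longrightarrow> UD_swap\<^sup>*\<^sup>* (u@X) (u@Y)"
  using E_cong[of X Y u "[]"] by simp

lemma E_cong_r: "UD_swap\<^sup>*\<^sup>* X Y \<Longrightarrow> UD_swap\<^sup>*\<^sup>* (X@v) (Y@v)"
  using E_cong[of X Y "[]" v] by simp

lemma UD_direct: "upper_prime U \<Longrightarrow> lower_prime D \<Longrightarrow> UD_swap\<^sup>*\<^sup>* (U@D) (D@U)"
  apply (rule r_into_rtranclp)
  unfolding UD_swap_def swap_of_type_def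
  apply (rule exI[of _ U], rule exI[of _ D], simp)
  apply (rule exI[of _ "[]"], rule exI[of _ "[]"], simp)
  done

lemma ek_Suc: "ek (Suc k) W = ek k W + lval (W!k)"
  by (simp add: ek_def)

lemma letter_neq: "a \<noteq> L \<longleftrightarrow> a = R" "a \<noteq> R \<longleftrightarrow> a = L"
  by (cases a; simp)+

lemma sum_list_lval: "sum_list (map lval W) = int (length (filter (\<lambda>a. a = R) W)) - int (length (filter (\<lambda>a. a = L) W))"
  by (induction W) (auto simp: lval_def letter_neq)

lemma ek_len: "ek (length W) W = sum_list (map lval W)"
  by (simp add: ek_def sum_list_sum_nth atLeast0LessThan)

lemma bal_ek: "balanced W \<longleftrightarrow> ek (length W) W = 0"
  by (auto simp add: ek_len sum_list_lval balanced_def)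

lemma ek_take: "j \<le> length W \<Longrightarrow> ek j (take j W) = ek j W"
  unfolding ek_def by (rule sum.cong) auto

lemma lval_ge: "lval x \<ge> -1" and lval_le: "lval x \<le> 1"
  by (auto simp: lval_def)

lemma prime_no_zero:
  assumes "prime_word P" "1 \<le> j" "j \<le> length P - 1"
  shows "ek j P \<noteq> 0"
proof
  assume z: "ek j P = 0"
  have P: "P \<noteq> []" "balanced P" using assms(1) unfolding prime_word_def by auto
  have jl: "j < length P" using assms P by (cases P) auto
  have A: "take j P \<noteq> []" using assms(2) P by auto
  have B: "drop j P \<noteq> []" using jl by auto
  have bA: "balanced (take j P)" using bal_ek[of "take j P"] z ek_take[of j P] jl by simp
  have bB: "balanced (drop j P)"
  proof -
    have "P = take j P @ drop j P" by simp
    then have "length (filter (\<lambda>a. a = L) (take j P)) + length (filter (\<lambda>a. a = L) (drop j P))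
       = length (filter (\<lambda>a. a = R) (take j P)) + length (filter (\<lambda>a. a = R) (drop j P))"
      using P(2) unfolding balanced_def by (metis filter_append length_append)
    then show ?thesis using bA unfolding balanced_def by simp
  qed
  show False using assms(1) A B bA bB unfolding prime_word_def
    by (metis append_take_drop_id)
qed

lemma prime_R_pos:
  assumes "prime_word P" "P!0 = R"
  shows "1 \<le> k \<Longrightarrow> k \<le> length P - 1 \<Longrightarrow> ek k P > 0"
proof (induction k)
  case 0 then show ?case by simp
next
  case (Suc k)
  show ?case
  proof (cases "k = 0")
    case True then show ?thesis using assms by (simp add: ek_Suc ek_def lval_def)
  next
    case False
    then have "ek k P > 0" using Suc by simp
    moreover have "ek (Suc k) P \<noteq> 0" using prime_no_zero[OF assms(1)] Suc.prems by simp
    ultimately show ?thesis using lval_ge[of "P!k"] unfolding ek_Suc by linarith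
  qed
qed

lemma prime_L_neg:
  assumes "prime_word P" "P!0 = L"
  shows "1 \<le> k \<Longrightarrow> k \<le> length P - 1 \<Longrightarrow> ek k P < 0"
proof (induction k)
  case 0 then show ?case by simp
next
  case (Suc k)
  show ?case
  proof (cases "k = 0")
    case True then show ?thesis using assms by (simp add: ek_Suc ek_def lval_def)
  next
    case False
    then have "ek k P < 0" using Suc by simp
    moreover have "ek (Suc k) P \<noteq> 0" using prime_no_zero[OF assms(1)] Suc.prems by simp
    ultimately show ?thesis using lval_le[of "P!k"] unfolding ek_Suc by linarith
  qed
qed

lemma bal_len: "balanced P \<Longrightarrow> P \<noteq> [] \<Longrightarrow> length P \<ge> 2"
proof (rule ccontr)
  assume "balanced P" "P \<noteq> []" "\<not> length P \<ge> 2"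
  then have "length P > 0" "length P < 2" by auto
  then have "length P = 1" by linarith
  then obtain x where "P = [x]" by (auto simp: length_Suc_conv)
  then show False using \<open>balanced P\<close> by (cases x) (auto simp: balanced_def)
qed

lemma upper_shape:
  assumes "prime_word P" "P!0 = R"
  shows "upper_prime P \<and> (\<exists>A. P = R # A @ [L] \<and> balanced A)"
proof -
  have up: "upper_prime P" unfolding upper_prime_def using assms prime_R_pos by blast
  have P: "P \<noteq> []" "balanced P" using assms(1) unfolding prime_word_def by auto
  define n where "n = length P"
  have n2: "n \<ge> 2" using bal_len P n_def by simp
  have pos: "ek (n-1) P > 0" using prime_R_pos[OF assms, of "n-1"] n2 n_def by simp
  have z: "ek n P = 0" using bal_ek P n_def by simp
  have "ek n P = ek (n-1) P + lval (P!(n-1))" using ek_Suc[of "n-1" P] n2 by simp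
  then have last: "P!(n-1) = L" using pos z by (cases "P!(n-1)") (auto simp: lval_def)
  obtain x T where xT: "P = x # T" using P by (cases P) auto
  have "T \<noteq> []" using xT n2 n_def by auto
  then obtain A y where Ay: "T = A @ [y]" by (cases T rule: rev_cases) auto
  have "x = R" using xT assms by simp
  moreover have "y = L" using last xT Ay n_def by simp
  ultimately have "P = R # A @ [L]" using xT Ay by simp
  moreover have "balanced A" using P(2) calculation by (simp add: balanced_def)
  ultimately show ?thesis using up by blast
qed

lemma lower_shape:
  assumes "prime_word P" "P!0 = L"
  shows "lower_prime P \<and> (\<exists>A. P = L # A @ [R] \<and> balanced A)"
proof -
  have up: "lower_prime P" unfolding lower_prime_def using assms prime_L_neg by blast
  have P: "P \<noteq> []" "balanced P" using assms(1) unfolding prime_word_def by auto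
  define n where "n = length P"
  have n2: "n \<ge> 2" using bal_len P n_def by simp
  have pos: "ek (n-1) P < 0" using prime_L_neg[OF assms, of "n-1"] n2 n_def by simp
  have z: "ek n P = 0" using bal_ek P n_def by simp
  have "ek n P = ek (n-1) P + lval (P!(n-1))" using ek_Suc[of "n-1" P] n2 by simp
  then have last: "P!(n-1) = R" using pos z by (cases "P!(n-1)") (auto simp: lval_def)
  obtain x T where xT: "P = x # T" using P by (cases P) auto
  have "T \<noteq> []" using xT n2 n_def by auto
  then obtain A y where Ay: "T = A @ [y]" by (cases T rule: rev_cases) auto
  have "x = L" using xT assms by simp
  moreover have "y = R" using last xT Ay n_def by simp
  ultimately have "P = L # A @ [R]" using xT Ay by simp
  moreover have "balanced A" using P(2) calculation by (simp add: balanced_def)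
  ultimately show ?thesis using up by blast
qed

lemma key: "balanced F \<Longrightarrow> balanced G \<Longrightarrow> UD_swap\<^sup>*\<^sup>* (F@G) (G@F)"
proof (induction "length F + length G" arbitrary: F G rule: less_induct)
  case less
  show ?case
  proof (cases "F = [] \<or> G = []")
    case True then show ?thesis by auto
  next
    case nE: False
    show ?thesis
    proof (cases "prime_word F")
      case False
      then obtain A B where AB: "A \<noteq> []" "B \<noteq> []" "balanced A" "balanced B" "F = A@B"
        using nE less.prems unfolding prime_word_def by blast
      have 1: "UD_swap\<^sup>*\<^sup>* (B@G) (G@B)" using less.hyps[of B G] AB less.prems by simp
      have 2: "UD_swap\<^sup>*\<^sup>* (A@G) (G@A)" using less.hyps[of A G] AB less.prems by simp
      have "UD_swap\<^sup>*\<^sup>* (A@B@G) (A@G@B)" using E_cong_l[OF 1] by simp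
      moreover have "UD_swap\<^sup>*\<^sup>* (A@G@B) (G@A@B)" using E_cong_r[OF 2, of B] by simp
      ultimately show ?thesis using AB by simp
    next
      case pF: True
      show ?thesis
      proof (cases "prime_word G")
        case False
        then obtain A B where AB: "A \<noteq> []" "B \<noteq> []" "balanced A" "balanced B" "G = A@B"
          using nE less.prems unfolding prime_word_def by blast
        have 1: "UD_swap\<^sup>*\<^sup>* (F@A) (A@F)" using less.hyps[of F A] AB less.prems by simp
        have 2: "UD_swap\<^sup>*\<^sup>* (F@B) (B@F)" using less.hyps[of F B] AB less.prems by simp
        have "UD_swap\<^sup>*\<^sup>* (F@A@B) (A@F@B)" using E_cong_r[OF 1, of B] by simp
        moreover have "UD_swap\<^sup>*\<^sup>* (A@F@B) (A@B@F)" using E_cong_l[OF 2] by simp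
        ultimately show ?thesis using AB by simp
      next
        case pG: True
        have lF: "F!0 = R \<or> F!0 = L" by (cases "F!0") auto
        have lG: "G!0 = R \<or> G!0 = L" by (cases "G!0") auto
        show ?thesis
        proof (cases "F!0 = R")
          case FR: True
          obtain A where A: "F = R # A @ [L]" "balanced A" using upper_shape[OF pF FR] by blast
          show ?thesis
          proof (cases "G!0 = R")
            case GR: True
            obtain B where B: "G = R # B @ [L]" "balanced B" using upper_shape[OF pG GR] by blast
            have bD: "balanced [L,R]" by (simp add: balanced_def)
            have h1: "UD_swap\<^sup>*\<^sup>* (A@[L,R]) ([L,R]@A)" using less.hyps[of A "[L,R]"] A B bD by simp
            have h2: "UD_swap\<^sup>*\<^sup>* (A@B) (B@A)" using less.hyps[of A B] A B by simp
            have h3: "UD_swap\<^sup>*\<^sup>* ([L,R]@B) (B@[L,R])" using less.hyps[of "[L,R]" B] A B bD by simp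
            have s1: "UD_swap\<^sup>*\<^sup>* (F@G) (R # L # R # A @ B @ [L])"
              using E_cong[OF h1, of "[R]" "B@[L]"] A B by simp
            have s2: "UD_swap\<^sup>*\<^sup>* (R # L # R # A @ B @ [L]) (R # L # R # B @ A @ [L])"
              using E_cong[OF h2, of "[R,L,R]" "[L]"] by simp
            have s3: "UD_swap\<^sup>*\<^sup>* (R # L # R # B @ A @ [L]) (G@F)"
              using E_cong[OF h3, of "[R]" "A@[L]"] A B by simp
            show ?thesis using s1 s2 s3 by (meson rtranclp_trans)
          next
            case GL: False
            then have "G!0 = L" using lG by simp
            then have "lower_prime G" using lower_shape[OF pG] by blast
            moreover have "upper_prime F" using upper_shape[OF pF FR] by blast
            ultimately show ?thesis using UD_direct by blast
          qed
        next
          case FL: False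
          then have FL: "F!0 = L" using lF by simp
          obtain A where A: "F = L # A @ [R]" "balanced A" using lower_shape[OF pF FL] by blast
          show ?thesis
          proof (cases "G!0 = L")
            case GL: True
            obtain B where B: "G = L # B @ [R]" "balanced B" using lower_shape[OF pG GL] by blast
            have bD: "balanced [R,L]" by (simp add: balanced_def)
            have h1: "UD_swap\<^sup>*\<^sup>* (A@[R,L]) ([R,L]@A)" using less.hyps[of A "[R,L]"] A B bD by simp
            have h2: "UD_swap\<^sup>*\<^sup>* (A@B) (B@A)" using less.hyps[of A B] A B by simp
            have h3: "UD_swap\<^sup>*\<^sup>* ([R,L]@B) (B@[R,L])" using less.hyps[of "[R,L]" B] A B bD by simp
            have s1: "UD_swap\<^sup>*\<^sup>* (F@G) (L # R # L # A @ B @ [R])"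
              using E_cong[OF h1, of "[L]" "B@[R]"] A B by simp
            have s2: "UD_swap\<^sup>*\<^sup>* (L # R # L # A @ B @ [R]) (L # R # L # B @ A @ [R])"
              using E_cong[OF h2, of "[L,R,L]" "[R]"] by simp
            have s3: "UD_swap\<^sup>*\<^sup>* (L # R # L # B @ A @ [R]) (G@F)"
              using E_cong[OF h3, of "[L]" "A@[R]"] A B by simp
            show ?thesis using s1 s2 s3 by (meson rtranclp_trans)
          next
            case GR: False
            then have "G!0 = R" using lG by simp
            then have "upper_prime G" using upper_shape[OF pG] by blast
            moreover have "lower_prime F" using lower_shape[OF pF FL] by blast
            ultimately show ?thesis using UD_direct E_sym by blast
          qed
        qed
      qed
    qed
  qed
qed


definition asupp :: "alg \<Rightarrow> word set" where
  "asupp a = {w. a w \<noteq> 0}"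

definition pair :: "alg \<Rightarrow> (word \<Rightarrow> complex) \<Rightarrow> complex" where
  "pair a \<phi> = (\<Sum>w\<in>asupp a. a w * \<phi> w)"

definition Einv :: "(word \<Rightarrow> complex) \<Rightarrow> bool" where
  "Einv \<phi> \<longleftrightarrow> (\<forall>x y. UD_swap\<^sup>*\<^sup>* x y \<longrightarrow> \<phi> x = \<phi> y)"

definition Inv :: "alg \<Rightarrow> bool" where
  "Inv a \<longleftrightarrow> fin_supp a \<and> (\<forall>\<phi>. Einv \<phi> \<longrightarrow> pair a \<phi> = 0)"

lemma fin_asupp: "fin_supp a \<longleftrightarrow> finite (asupp a)"
  by (simp add: fin_supp_def asupp_def)

lemma pair_sup: "finite T \<Longrightarrow> asupp a \<subseteq> T \<Longrightarrow> pair a \<phi> = (\<Sum>w\<in>T. a w * \<phi> w)"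
  unfolding pair_def by (rule sum.mono_neutral_left) (auto simp: asupp_def)

lemma Inv_zero: "Inv (\<lambda>w. 0)"
  by (simp add: Inv_def fin_supp_def pair_def asupp_def)

lemma Inv_add:
  assumes "Inv a" "Inv b" shows "Inv (\<lambda>w. a w + b w)"
proof -
  let ?T = "asupp a \<union> asupp b"
  have fT: "finite ?T" using assms by (simp add: Inv_def fin_asupp)
  have sub: "asupp (\<lambda>w. a w + b w) \<subseteq> ?T" by (auto simp: asupp_def)
  have "pair (\<lambda>w. a w + b w) \<phi> = 0" if "Einv \<phi>" for \<phi>
  proof -
    have "pair (\<lambda>w. a w + b w) \<phi> = (\<Sum>w\<in>?T. a w * \<phi> w) + (\<Sum>w\<in>?T. b w * \<phi> w)"
      using pair_sup[OF fT sub] by (simp add: distrib_right sum.distrib)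
    also have "\<dots> = pair a \<phi> + pair b \<phi>"
      using pair_sup[OF fT, of a] pair_sup[OF fT, of b] by auto
    finally show ?thesis using assms that by (simp add: Inv_def)
  qed
  then show ?thesis using fT sub by (auto simp: Inv_def fin_asupp intro: finite_subset)
qed

lemma Inv_scal:
  assumes "Inv a" shows "Inv (\<lambda>w. k * a w)"
proof -
  have fT: "finite (asupp a)" using assms by (simp add: Inv_def fin_asupp)
  have sub: "asupp (\<lambda>w. k * a w) \<subseteq> asupp a" by (auto simp: asupp_def)
  have "pair (\<lambda>w. k * a w) \<phi> = 0" if "Einv \<phi>" for \<phi>
  proof -
    have "pair (\<lambda>w. k * a w) \<phi> = k * pair a \<phi>"
      using pair_sup[OF fT sub] by (simp add: pair_def sum_distrib_left mult.assoc)
    then show ?thesis using assms that by (simp add: Inv_def)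
  qed
  then show ?thesis using fT sub by (auto simp: Inv_def fin_asupp intro: finite_subset)
qed

lemma Inv_sum: "finite S \<Longrightarrow> (\<forall>u\<in>S. Inv (f u)) \<Longrightarrow> Inv (\<lambda>w. \<Sum>u\<in>S. f u w)"
proof (induction S rule: finite_induct)
  case empty then show ?case using Inv_zero by simp
next
  case (insert x F)
  then show ?case using Inv_add[of "f x" "\<lambda>w. \<Sum>u\<in>F. f u w"] by simp
qed

lemma amul_monL: "amul (mon u) a w = (if take (length u) w = u then a (drop (length u) w) else 0)"
proof -
  have "amul (mon u) a w = (\<Sum>i\<le>length w. if i = length u then (if take i w = u then a (drop i w) else 0) else 0)"
    unfolding amul_def
  proof (rule sum.cong)
    fix i assume "i \<in> {..length w}"
    then have "length (take i w) = i" by simp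
    then show "mon u (take i w) * a (drop i w) = (if i = length u then (if take i w = u then a (drop i w) else 0) else 0)"
      by (auto simp: mon_def)
  qed simp
  also have "\<dots> = (if take (length u) w = u then a (drop (length u) w) else 0)"
    by (auto simp: sum.delta)
  finally show ?thesis .
qed

lemma amul_monR: "amul a (mon u) w = (if drop (length w - length u) w = u then a (take (length w - length u) w) else 0)"
proof -
  have "amul a (mon u) w = (\<Sum>i\<le>length w. if i = length w - length u then (if drop i w = u then a (take i w) else 0) else 0)"
    unfolding amul_def
  proof (rule sum.cong)
    fix i assume "i \<in> {..length w}"
    then have "length (drop i w) = length w - i" by simp
    then show "a (take i w) * mon u (drop i w) = (if i = length w - length u then (if drop i w = u then a (take i w) else 0) else 0)"
      using \<open>i \<in> {..length w}\<close> by (auto simp: mon_def)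
  qed simp
  also have "\<dots> = (if drop (length w - length u) w = u then a (take (length w - length u) w) else 0)"
    by (auto simp: sum.delta)
  finally show ?thesis .
qed

lemma Einv_shiftL: "Einv \<phi> \<Longrightarrow> Einv (\<lambda>v. \<phi> (u@v))"
  unfolding Einv_def using E_cong_l by blast

lemma Einv_shiftR: "Einv \<phi> \<Longrightarrow> Einv (\<lambda>v. \<phi> (v@u))"
  unfolding Einv_def using E_cong_r by blast

lemma Inv_shiftL:
  assumes "Inv a" shows "Inv (amul (mon u) a)"
proof -
  let ?b = "amul (mon u) a"
  have fA: "finite (asupp a)" using assms by (simp add: Inv_def fin_asupp)
  have sub: "asupp ?b \<subseteq> (\<lambda>v. u@v) ` asupp a"
  proof
    fix w assume "w \<in> asupp ?b"
    then have "take (length u) w = u" "a (drop (length u) w) \<noteq> 0"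
      by (auto simp: asupp_def amul_monL split: if_splits)
    then show "w \<in> (\<lambda>v. u@v) ` asupp a" unfolding asupp_def
      by (metis (mono_tags, lifting) append_take_drop_id image_eqI mem_Collect_eq)
  qed
  have fT: "finite ((\<lambda>v. u@v) ` asupp a)" using fA by simp
  have "pair ?b \<phi> = 0" if "Einv \<phi>" for \<phi>
  proof -
    have "pair ?b \<phi> = (\<Sum>w\<in>(\<lambda>v. u@v) ` asupp a. ?b w * \<phi> w)" using pair_sup[OF fT sub] .
    also have "\<dots> = (\<Sum>v\<in>asupp a. ?b (u@v) * \<phi> (u@v))"
      by (subst sum.reindex) (auto intro: inj_onI)
    also have "\<dots> = (\<Sum>v\<in>asupp a. a v * \<phi> (u@v))" by (simp add: amul_monL)
    also have "\<dots> = pair a (\<lambda>v. \<phi> (u@v))" by (simp add: pair_def)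
    also have "\<dots> = 0" using assms Einv_shiftL[OF that] by (simp add: Inv_def)
    finally show ?thesis .
  qed
  then show ?thesis using fT sub by (auto simp: Inv_def fin_asupp intro: finite_subset)
qed

lemma Inv_shiftR:
  assumes "Inv a" shows "Inv (amul a (mon u))"
proof -
  let ?b = "amul a (mon u)"
  have fA: "finite (asupp a)" using assms by (simp add: Inv_def fin_asupp)
  have sub: "asupp ?b \<subseteq> (\<lambda>v. v@u) ` asupp a"
  proof
    fix w assume "w \<in> asupp ?b"
    then have "drop (length w - length u) w = u" "a (take (length w - length u) w) \<noteq> 0"
      by (auto simp: asupp_def amul_monR split: if_splits)
    then show "w \<in> (\<lambda>v. v@u) ` asupp a" unfolding asupp_def
      by (metis (mono_tags, lifting) append_take_drop_id image_eqI mem_Collect_eq)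
  qed
  have fT: "finite ((\<lambda>v. v@u) ` asupp a)" using fA by simp
  have "pair ?b \<phi> = 0" if "Einv \<phi>" for \<phi>
  proof -
    have "pair ?b \<phi> = (\<Sum>w\<in>(\<lambda>v. v@u) ` asupp a. ?b w * \<phi> w)" using pair_sup[OF fT sub] .
    also have "\<dots> = (\<Sum>v\<in>asupp a. ?b (v@u) * \<phi> (v@u))"
      by (subst sum.reindex) (auto intro: inj_onI)
    also have "\<dots> = (\<Sum>v\<in>asupp a. a v * \<phi> (v@u))" by (simp add: amul_monR)
    also have "\<dots> = pair a (\<lambda>v. \<phi> (v@u))" by (simp add: pair_def)
    also have "\<dots> = 0" using assms Einv_shiftR[OF that] by (simp add: Inv_def)
    finally show ?thesis .
  qed
  then show ?thesis using fT sub by (auto simp: Inv_def fin_asupp intro: finite_subset)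
qed

lemma sum_mon: "finite S \<Longrightarrow> (\<Sum>u\<in>S. c u * mon u t) = (if t \<in> S then c t else 0)"
proof -
  assume "finite S"
  have "(\<Sum>u\<in>S. c u * mon u t) = (\<Sum>u\<in>S. if t = u then c u else 0)"
    by (rule sum.cong) (auto simp: mon_def)
  then show ?thesis using \<open>finite S\<close> by (simp add: sum.delta)
qed

lemma ite_nz: "(if (x::complex) \<noteq> 0 then x else 0) = x" by simp

lemma amul_decompL:
  assumes "fin_supp c"
  shows "amul c a = (\<lambda>w. \<Sum>u\<in>asupp c. c u * amul (mon u) a w)"
proof
  fix w
  have fS: "finite (asupp c)" using assms by (simp add: fin_asupp)
  have "(\<Sum>u\<in>asupp c. c u * amul (mon u) a w)
      = (\<Sum>u\<in>asupp c. \<Sum>i\<le>length w. c u * mon u (take i w) * a (drop i w))"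
    by (simp add: amul_def sum_distrib_left mult.assoc)
  also have "\<dots> = (\<Sum>i\<le>length w. \<Sum>u\<in>asupp c. c u * mon u (take i w) * a (drop i w))"
    by (rule sum.swap)
  also have "\<dots> = (\<Sum>i\<le>length w. (\<Sum>u\<in>asupp c. c u * mon u (take i w)) * a (drop i w))"
    by (simp add: sum_distrib_right)
  also have "\<dots> = (\<Sum>i\<le>length w. c (take i w) * a (drop i w))"
    using fS by (simp add: sum_mon asupp_def ite_nz)
  finally show "amul c a w = (\<Sum>u\<in>asupp c. c u * amul (mon u) a w)"
    by (simp add: amul_def)
qed

lemma amul_decompR:
  assumes "fin_supp c"
  shows "amul a c = (\<lambda>w. \<Sum>u\<in>asupp c. c u * amul a (mon u) w)"
proof
  fix w
  have fS: "finite (asupp c)" using assms by (simp add: fin_asupp)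
  have "(\<Sum>u\<in>asupp c. c u * amul a (mon u) w)
      = (\<Sum>u\<in>asupp c. \<Sum>i\<le>length w. c u * mon u (drop i w) * a (take i w))"
    by (simp add: amul_def sum_distrib_left mult.assoc mult.commute mult.left_commute)
  also have "\<dots> = (\<Sum>i\<le>length w. \<Sum>u\<in>asupp c. c u * mon u (drop i w) * a (take i w))"
    by (rule sum.swap)
  also have "\<dots> = (\<Sum>i\<le>length w. (\<Sum>u\<in>asupp c. c u * mon u (drop i w)) * a (take i w))"
    by (simp add: sum_distrib_right)
  also have "\<dots> = (\<Sum>i\<le>length w. a (take i w) * c (drop i w))"
    using fS by (simp add: sum_mon asupp_def mult.commute ite_nz)
  finally show "amul a c w = (\<Sum>u\<in>asupp c. c u * amul a (mon u) w)"
    by (simp add: amul_def)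
qed

lemma Inv_lmul: "fin_supp c \<Longrightarrow> Inv a \<Longrightarrow> Inv (amul c a)"
  apply (subst amul_decompL, assumption)
  apply (rule Inv_sum)
   apply (simp add: fin_asupp)
  apply (auto intro: Inv_scal Inv_shiftL)
  done

lemma Inv_rmul: "fin_supp c \<Longrightarrow> Inv a \<Longrightarrow> Inv (amul a c)"
  apply (subst amul_decompR, assumption)
  apply (rule Inv_sum)
   apply (simp add: fin_asupp)
  apply (auto intro: Inv_scal Inv_shiftR)
  done

lemma Inv_monpair:
  assumes "UD_swap\<^sup>*\<^sup>* X Y"
  shows "Inv (\<lambda>w. mon X w - mon Y w)"
proof -
  let ?a = "\<lambda>w. mon X w - mon Y w"
  have sub: "asupp ?a \<subseteq> {X, Y}" by (auto simp: asupp_def mon_def)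
  have fT: "finite {X, Y}" by simp
  have "pair ?a \<phi> = 0" if "Einv \<phi>" for \<phi>
  proof -
    have eq: "\<phi> X = \<phi> Y" using that assms by (simp add: Einv_def)
    show ?thesis
    proof (cases "X = Y")
      case True then show ?thesis by (simp add: pair_def asupp_def)
    next
      case False
      then show ?thesis using pair_sup[OF fT sub] eq by (simp add: mon_def)
    qed
  qed
  then show ?thesis using fT sub by (auto simp: Inv_def fin_asupp intro: finite_subset)
qed

lemma J_Inv: "a \<in> Jideal \<Longrightarrow> Inv a"
proof (induction rule: Jideal.induct)
  case (gen F G) then show ?case using Inv_monpair key by blast
next
  case zero then show ?case by (rule Inv_zero)
next
  case (add a b) then show ?case using Inv_add by blast
next
  case (lmul c a) then show ?case using Inv_lmul by blast
next
  case (rmul c a) then show ?case using Inv_rmul by blast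
qed

lemma sim_imp_E: "sim X Y \<Longrightarrow> UD_swap\<^sup>*\<^sup>* X Y"
proof -
  assume "sim X Y"
  then have I: "Inv (\<lambda>w. mon X w - mon Y w)" unfolding sim_def by (rule J_Inv)
  show ?thesis
  proof (cases "X = Y")
    case True then show ?thesis by simp
  next
    case False
    define \<phi> where "\<phi> = (\<lambda>w. if UD_swap\<^sup>*\<^sup>* X w then 1 else (0::complex))"
    have "Einv \<phi>" unfolding Einv_def \<phi>_def
      by (meson E_sym rtranclp_trans)
    then have "pair (\<lambda>w. mon X w - mon Y w) \<phi> = 0" using I by (simp add: Inv_def)
    moreover have "asupp (\<lambda>w. mon X w - mon Y w) \<subseteq> {X, Y}" by (auto simp: asupp_def mon_def)
    ultimately have "\<phi> X - \<phi> Y = 0" using pair_sup[of "{X,Y}"] False by (simp add: mon_def)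
    then show ?thesis by (simp add: \<phi>_def split: if_splits)
  qed
qed

lemma sim_refl: "sim X X"
  unfolding sim_def using Jideal.zero by simp

lemma sim_trans: "sim X Y \<Longrightarrow> sim Y Z \<Longrightarrow> sim X Z"
  unfolding sim_def using Jideal.add[of "\<lambda>w. mon X w - mon Y w" "\<lambda>w. mon Y w - mon Z w"] by simp

lemma fin_mon: "fin_supp (mon u)"
proof -
  have "{w. mon u w \<noteq> 0} = {u}" by (auto simp: mon_def)
  then show ?thesis by (simp add: fin_supp_def)
qed

lemma amulL_diff: "amul (mon u) (\<lambda>w. mon X w - mon Y w) = (\<lambda>w. mon (u@X) w - mon (u@Y) w)"
proof
  fix w
  show "amul (mon u) (\<lambda>w. mon X w - mon Y w) w = mon (u@X) w - mon (u@Y) w"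
  proof (cases "take (length u) w = u")
    case True
    then have w: "w = u @ drop (length u) w" by (metis append_take_drop_id)
    show ?thesis unfolding amul_monL using True
      by (subst (3 4) w) (simp add: mon_def)
  next
    case False
    then have "w \<noteq> u@X" "w \<noteq> u@Y" by auto
    then show ?thesis unfolding amul_monL using False by (simp add: mon_def)
  qed
qed

lemma amulR_diff: "amul (\<lambda>w. mon X w - mon Y w) (mon u) = (\<lambda>w. mon (X@u) w - mon (Y@u) w)"
proof
  fix w
  show "amul (\<lambda>w. mon X w - mon Y w) (mon u) w = mon (X@u) w - mon (Y@u) w"
  proof (cases "drop (length w - length u) w = u")
    case True
    then have w: "w = take (length w - length u) w @ u" by (metis append_take_drop_id)
    show ?thesis unfolding amul_monR using True
      by (subst (3 4) w) (simp add: mon_def)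
  next
    case False
    then have "w \<noteq> X@u" "w \<noteq> Y@u" by auto
    then show ?thesis unfolding amul_monR using False by (simp add: mon_def)
  qed
qed

lemma sim_swap:
  assumes "F \<noteq> []" "G \<noteq> []" "balanced F" "balanced G"
  shows "sim (W1@F@G@W2) (W1@G@F@W2)"
proof -
  have "(\<lambda>w. mon (F @ G) w - mon (G @ F) w) \<in> Jideal" using Jideal.gen assms by blast
  then have "amul (\<lambda>w. mon (F @ G) w - mon (G @ F) w) (mon W2) \<in> Jideal"
    using Jideal.rmul fin_mon by blast
  then have "amul (mon W1) (amul (\<lambda>w. mon (F @ G) w - mon (G @ F) w) (mon W2)) \<in> Jideal"
    using Jideal.lmul fin_mon by blast
  then show ?thesis unfolding sim_def amulR_diff amulL_diff by simp
qed

lemma UD_sim: "UD_swap X Y \<Longrightarrow> sim X Y"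
proof -
  assume "UD_swap X Y"
  then obtain U D W1 W2 where UD: "upper_prime U" "lower_prime D"
    and c: "(X = W1 @ U @ D @ W2 \<and> Y = W1 @ D @ U @ W2) \<or> (X = W1 @ D @ U @ W2 \<and> Y = W1 @ U @ D @ W2)"
    unfolding UD_swap_def swap_of_type_def by blast
  have p: "U \<noteq> []" "D \<noteq> []" "balanced U" "balanced D"
    using UD unfolding upper_prime_def lower_prime_def prime_word_def by auto
  show ?thesis using c sim_swap[OF p(1,2,3,4)] sim_swap[OF p(2,1,4,3)] by blast
qed

lemma E_imp_sim: "UD_swap\<^sup>*\<^sup>* X Y \<Longrightarrow> sim X Y"
proof (induction rule: rtranclp.induct)
  case (rtrancl_refl a) then show ?case by (rule sim_refl)
next
  case (rtrancl_into_rtrancl a b c)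
  then show ?case using sim_trans UD_sim by blast
qed

theorem corollary5p4:
  fixes X Y :: word
  shows "sim X Y \<longleftrightarrow> UD_swap\<^sup>*\<^sup>* X Y"
  using sim_imp_E E_imp_sim by blast

end
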